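(* Let $\sigma>0$, $\alpha>0$, $\Lambda = \frac{1}{\sigma}\sqrt{\Gamma(3/\alpha)/\Gamma(1/\alpha)}$, and let $Z$ be a real random variable with density $f_Z(z) = \frac{\alpha \Lambda^2}{\Gamma(1/\alpha)^2} K_0\!\left(2\Lambda^\alpha |z|^{\alpha/2}\right)$. Then for every $s$ with $\operatorname{Re} s > 0$, the Mellin transform of the density of $|Z|$ (equivalently, $\mathbb{E}\bigl[|Z|^{s-1}\bigr]$) is $$\int_0^\infty z^{s-1}\, 2 f_Z(z)\, dz = \mathbb{E}\bigl[|Z|^{s-1}\bigr] = \frac{\Lambda^{2-2s}}{\Gamma(1/\alpha)^2}\,\Gamma\!\left(\frac{s}{\alpha}\right)^2 .$$
   Context: $K_0$ is the modified Bessel function of the second kind of order $0$; $\Gamma$ is the Euler Gamma function. This $f_Z$ is the density of the product of two independent generalized normal $GND(0,\sigma,\alpha)$ variables (density $\frac{\alpha\Lambda}{2\Gamma(1/\alpha)} e^{-\Lambda^\alpha |x|^\alpha}$). The density of $|Z|$ is $2f_Z(z)$ for $z>0$. *)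

theory Defs
  imports "HOL-Analysis.Analysis"
begin

text \<open>Modified Bessel function of the second kind of order 0, via its standard
integral representation K_0(x) = integral over t from 0 to infinity of exp(-x cosh t),
valid for x > 0 (only used for x > 0 below).\<close>
definition besselK0 :: "real \<Rightarrow> real" where
  "besselK0 x = integral {0..} (\<lambda>t. exp (- x * cosh t))"

definition gnd_Lambda :: "real \<Rightarrow> real \<Rightarrow> real" where
  "gnd_Lambda \<sigma> \<alpha> = (1 / \<sigma>) * sqrt (Gamma (3 / \<alpha>) / Gamma (1 / \<alpha>))"

text \<open>Density of the product Z of two independent GND(0, sigma, alpha) variables.\<close>
definition prod_gnd_density :: "real \<Rightarrow> real \<Rightarrow> real \<Rightarrow> real" where
  "prod_gnd_density \<sigma> \<alpha> z =
     (let \<Lambda> = gnd_Lambda \<sigma> \<alpha> in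
        \<alpha> * \<Lambda>^2 / (Gamma (1 / \<alpha>))^2 * besselK0 (2 * \<Lambda> powr \<alpha> * \<bar>z\<bar> powr (\<alpha> / 2)))"

end

theory Submission
  imports Defs
begin
lemma cpow_pos: "0 < x \<Longrightarrow> complex_of_real x powr c = exp (c * of_real (ln x))"
  by (simp add: powr_def Ln_of_real)

lemma lemG:
  fixes \<gamma> a :: real and s :: complex
  assumes g: "\<gamma> > 0" and a: "a > 0" and s: "Re s > 0"
  shows "(\<lambda>z. exp ((s-1) * of_real (ln z)) * of_real (exp (-\<gamma> * z powr a))) absolutely_integrable_on {0<..} \<and>
         integral {0<..} (\<lambda>z. exp ((s-1) * of_real (ln z)) * of_real (exp (-\<gamma> * z powr a)))
           = exp (-(s / of_real a) * of_real (ln \<gamma>)) * Gamma (s / of_real a) / of_real a"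
proof -
  define w where "w = s / of_real a"
  have w: "Re w > 0" using s a by (simp add: w_def Re_divide_of_real)
  define f where "f = (\<lambda>v::real. complex_of_real v powr (w - 1) / of_real (exp v))"
  have fI: "f absolutely_integrable_on {0<..}"
    unfolding f_def by (rule absolutely_integrable_Gamma_integral'[OF w])
  have fV: "integral {0<..} f = Gamma w"
    unfolding f_def using Gamma_integral_complex'[OF w] by (rule integral_unique)
  define gg where "gg = (\<lambda>z::real. \<gamma> * z powr a)"
  define h where "h = (\<lambda>z::real. \<gamma> * (a * z powr (a - 1)))"
  have der: "(gg has_field_derivative h z) (at z within {0<..})" if "z \<in> {0<..}" for z
    using has_field_derivative_at_within[OF DERIV_cmult[OF has_real_derivative_powr[of z a]], of \<gamma> "{0<..}"] that
    by (simp add: gg_def h_def)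
  have inj: "inj_on gg {0<..}"
  proof (rule inj_onI)
    fix x y :: real assume x: "x \<in> {0<..}" and y: "y \<in> {0<..}" and e: "gg x = gg y"
    then have "x powr a = y powr a" using g by (simp add: gg_def)
    then have "(x powr a) powr (1/a) = (y powr a) powr (1/a)" by simp
    then show "x = y" using x y a by (simp add: powr_powr)
  qed
  have img: "gg ` {0<..} = {0<..}"
  proof
    show "gg ` {0<..} \<subseteq> {0<..}" using g by (auto simp: gg_def)
    show "{0<..} \<subseteq> gg ` {0<..}"
    proof
      fix v :: real assume v: "v \<in> {0<..}"
      have "gg ((v/\<gamma>) powr (1/a)) = v" using v g a by (simp add: gg_def powr_powr)
      moreover have "(v/\<gamma>) powr (1/a) \<in> {0<..}" using v g by simp
      ultimately show "v \<in> gg ` {0<..}" by (metis image_eqI)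
    qed
  qed
  have cv: "(\<lambda>x. \<bar>h x\<bar> *\<^sub>R f (gg x)) absolutely_integrable_on {0<..} \<and>
       integral {0<..} (\<lambda>x. \<bar>h x\<bar> *\<^sub>R f (gg x)) = Gamma w"
    using has_absolute_integral_change_of_variables_real[of "{0<..}" gg h f "Gamma w", OF _ der inj]
      fI fV img by simp
  define C where "C = of_real a * exp (w * of_real (ln \<gamma>))"
  have C0: "C \<noteq> 0" using a by (simp add: C_def)
  have pt: "\<bar>h z\<bar> *\<^sub>R f (gg z) = C * (exp ((s-1) * of_real (ln z)) * of_real (exp (-\<gamma> * z powr a)))"
    if z: "z \<in> {0<..}" for z
  proof -
    have z0: "z > 0" using z by simp
    have hz: "\<bar>h z\<bar> = \<gamma> * a * exp ((a-1) * ln z)" using z0 g a by (simp add: h_def powr_def)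
    have ggz: "ln (gg z) = ln \<gamma> + a * ln z" using z0 g by (simp add: gg_def ln_mult ln_powr)
    have "f (gg z) = exp ((w - 1) * of_real (ln (gg z))) / of_real (exp (gg z))"
      unfolding f_def using z0 g by (subst cpow_pos) (auto simp: gg_def)
    then have "f (gg z) = exp ((w - 1) * of_real (ln \<gamma> + a * ln z)) / of_real (exp (gg z))"
      by (simp only: ggz)
    then have e0: "f (gg z) = exp ((w - 1) * of_real (ln \<gamma> + a * ln z) - of_real (gg z))"
      by (simp add: exp_diff exp_of_real)
    have e1: "complex_of_real (\<bar>h z\<bar>) = of_real a * exp (of_real (ln \<gamma> + (a-1) * ln z))"
      unfolding hz exp_of_real using g by (simp add: exp_add)
    have sw: "s = w * of_real a" using a by (simp add: w_def)
    have ex: "of_real (ln \<gamma> + (a-1) * ln z) + ((w - 1) * of_real (ln \<gamma> + a * ln z) - of_real (gg z))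
        = w * of_real (ln \<gamma>) + ((s-1) * of_real (ln z) + of_real (-\<gamma> * z powr a))"
      unfolding sw gg_def by (simp add: algebra_simps)
    have "\<bar>h z\<bar> *\<^sub>R f (gg z) = complex_of_real (\<bar>h z\<bar>) * f (gg z)"
      by (simp add: scaleR_conv_of_real)
    also have "\<dots> = of_real a * exp (of_real (ln \<gamma> + (a-1) * ln z) + ((w - 1) * of_real (ln \<gamma> + a * ln z) - of_real (gg z)))"
      unfolding e0 e1 by (simp add: exp_add)
    also have "\<dots> = of_real a * exp (w * of_real (ln \<gamma>) + ((s-1) * of_real (ln z) + of_real (-\<gamma> * z powr a)))"
      unfolding ex ..
    also have "\<dots> = C * (exp ((s-1) * of_real (ln z)) * of_real (exp (-\<gamma> * z powr a)))"
      unfolding C_def exp_of_real[symmetric] exp_add by (simp only: mult_ac)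
    finally show ?thesis .
  qed
  let ?F = "\<lambda>z. exp ((s-1) * of_real (ln z)) * of_real (exp (-\<gamma> * z powr a))"
  have eqF: "?F z = inverse C * (\<bar>h z\<bar> *\<^sub>R f (gg z))" if "z \<in> {0<..}" for z
    using pt[OF that] C0 by simp
  have I1: "(\<lambda>z. inverse C * (\<bar>h z\<bar> *\<^sub>R f (gg z))) absolutely_integrable_on {0<..}"
    using cv by (intro set_integrable_mult_right) auto
  have "?F absolutely_integrable_on {0<..}"
    using I1 by (subst set_integrable_cong[OF refl refl eqF]) auto
  moreover have "integral {0<..} ?F = inverse C * Gamma w"
  proof -
    have "integral {0<..} ?F = integral {0<..} (\<lambda>z. inverse C * (\<bar>h z\<bar> *\<^sub>R f (gg z)))"
      by (rule integral_cong[OF eqF])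
    also have "\<dots> = inverse C * integral {0<..} (\<lambda>z. \<bar>h z\<bar> *\<^sub>R f (gg z))"
      by (rule integral_mult_right)
    finally show ?thesis using cv by simp
  qed
  moreover have "inverse C * Gamma w = exp (-(s / of_real a) * of_real (ln \<gamma>)) * Gamma (s / of_real a) / of_real a"
    unfolding C_def w_def by (simp add: exp_minus field_simps)
  ultimately show ?thesis by simp
qed

lemma hk2lb:
  fixes f :: "real \<Rightarrow> 'b::euclidean_space"
  assumes "f absolutely_integrable_on S" "(\<lambda>x. indicator S x *\<^sub>R f x) \<in> borel_measurable borel"
  shows "integrable lborel (\<lambda>x. indicator S x *\<^sub>R f x)" "(\<integral>x. indicator S x *\<^sub>R f x \<partial>lborel) = integral S f"
proof -
  show i: "integrable lborel (\<lambda>x. indicator S x *\<^sub>R f x)"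
    using assms integrable_completion[of "\<lambda>x. indicator S x *\<^sub>R f x" lborel]
    by (simp add: set_integrable_def)
  show "(\<integral>x. indicator S x *\<^sub>R f x \<partial>lborel) = integral S f"
    using set_borel_integral_eq_integral(2)[of S f] i
    by (simp add: set_integrable_def set_lebesgue_integral_def)
qed

lemma lb2hk:
  fixes f :: "real \<Rightarrow> 'b::euclidean_space"
  assumes "integrable lborel (\<lambda>x. indicator S x *\<^sub>R f x)"
  shows "f absolutely_integrable_on S" "integral S f = (\<integral>x. indicator S x *\<^sub>R f x \<partial>lborel)"
proof -
  have m: "(\<lambda>x. indicator S x *\<^sub>R f x) \<in> borel_measurable lborel"
    using assms by (rule borel_measurable_integrable)
  show "f absolutely_integrable_on S"
    using assms integrable_completion[of "\<lambda>x. indicator S x *\<^sub>R f x" lborel] m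
    by (simp add: set_integrable_def)
  show "integral S f = (\<integral>x. indicator S x *\<^sub>R f x \<partial>lborel)"
    using set_borel_integral_eq_integral(2)[of S f] assms
    by (simp add: set_integrable_def set_lebesgue_integral_def)
qed

lemma lemG_lb:
  fixes \<gamma> a :: real and s :: complex
  assumes g: "\<gamma> > 0" and a: "a > 0" and s: "Re s > 0"
  shows "integrable lborel (\<lambda>z. indicator {0<..} z *\<^sub>R (exp ((s-1) * of_real (ln z)) * of_real (exp (-\<gamma> * z powr a))))"
    "(\<integral>z. indicator {0<..} z *\<^sub>R (exp ((s-1) * of_real (ln z)) * of_real (exp (-\<gamma> * z powr a))) \<partial>lborel)
      = exp (-(s / of_real a) * of_real (ln \<gamma>)) * Gamma (s / of_real a) / of_real a"
proof -
  have m: "(\<lambda>z::real. indicator {0<..} z *\<^sub>R (exp ((s-1) * of_real (ln z)) * complex_of_real (exp (-\<gamma> * z powr a)))) \<in> borel_measurable borel"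
    by measurable
  show "integrable lborel (\<lambda>z. indicator {0<..} z *\<^sub>R (exp ((s-1) * of_real (ln z)) * of_real (exp (-\<gamma> * z powr a))))"
    using hk2lb(1)[OF conjunct1[OF lemG[OF g a s]] m] .
  show "(\<integral>z. indicator {0<..} z *\<^sub>R (exp ((s-1) * of_real (ln z)) * of_real (exp (-\<gamma> * z powr a))) \<partial>lborel)
      = exp (-(s / of_real a) * of_real (ln \<gamma>)) * Gamma (s / of_real a) / of_real a"
    using hk2lb(2)[OF conjunct1[OF lemG[OF g a s]] m] conjunct2[OF lemG[OF g a s]] by (rule trans)
qed

lemma lemG_lbR:
  fixes \<gamma> a \<sigma> :: real
  assumes g: "\<gamma> > 0" and a: "a > 0" and s: "\<sigma> > 0"
  shows "integrable lborel (\<lambda>z. indicator {0<..} z * (exp ((\<sigma>-1) * ln z) * exp (-\<gamma> * z powr a)))"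
    "(\<integral>z. indicator {0<..} z * (exp ((\<sigma>-1) * ln z) * exp (-\<gamma> * z powr a)) \<partial>lborel)
      = exp (-(\<sigma> / a) * ln \<gamma>) * Gamma (\<sigma> / a) / a"
proof -
  have eq: "(\<lambda>z. indicator {0<..} z *\<^sub>R (exp ((complex_of_real \<sigma>-1) * of_real (ln z)) * of_real (exp (-\<gamma> * z powr a))))
    = (\<lambda>z. complex_of_real (indicator {0<..} z * (exp ((\<sigma>-1) * ln z) * exp (-\<gamma> * z powr a))))"
  proof (rule ext)
    fix z :: real
    have "(complex_of_real \<sigma> - 1) * of_real (ln z) = of_real ((\<sigma>-1) * ln z)" by simp
    then have "exp ((complex_of_real \<sigma> - 1) * of_real (ln z)) = of_real (exp ((\<sigma>-1) * ln z))"
      by (simp only: exp_of_real)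
    then show "indicator {0<..} z *\<^sub>R (exp ((complex_of_real \<sigma>-1) * of_real (ln z)) * of_real (exp (-\<gamma> * z powr a)))
      = complex_of_real (indicator {0<..} z * (exp ((\<sigma>-1) * ln z) * exp (-\<gamma> * z powr a)))"
      by (simp only: scaleR_conv_of_real of_real_mult)
  qed
  have s': "Re (complex_of_real \<sigma>) > 0" using s by simp
  note A = lemG_lb[of \<gamma> a "of_real \<sigma>", OF g a s', unfolded eq]
  show "integrable lborel (\<lambda>z. indicator {0<..} z * (exp ((\<sigma>-1) * ln z) * exp (-\<gamma> * z powr a)))"
    using A(1) by (simp only: complex_of_real_integrable_eq)
  have "complex_of_real (\<integral>z. indicator {0<..} z * (exp ((\<sigma>-1) * ln z) * exp (-\<gamma> * z powr a)) \<partial>lborel)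
     = complex_of_real (exp (-(\<sigma> / a) * ln \<gamma>) * Gamma (\<sigma> / a) / a)"
  proof -
    have r1: "(complex_of_real \<sigma> / of_real a) = of_real (\<sigma>/a)" by simp
    have r2: "-(complex_of_real (\<sigma>/a)) * of_real (ln \<gamma>) = of_real (-(\<sigma>/a) * ln \<gamma>)" by simp
    have "exp (-(complex_of_real \<sigma> / of_real a) * of_real (ln \<gamma>)) * Gamma (complex_of_real \<sigma> / of_real a) / of_real a
       = complex_of_real (exp (-(\<sigma> / a) * ln \<gamma>)) * of_real (Gamma (\<sigma> / a)) / of_real a"
      by (simp only: r1 r2 exp_of_real Gamma_complex_of_real)
    also have "\<dots> = complex_of_real (exp (-(\<sigma> / a) * ln \<gamma>) * Gamma (\<sigma> / a) / a)" by simp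
    finally show ?thesis using A(2) by (simp only: integral_complex_of_real)
  qed
  then show "(\<integral>z. indicator {0<..} z * (exp ((\<sigma>-1) * ln z) * exp (-\<gamma> * z powr a)) \<partial>lborel)
      = exp (-(\<sigma> / a) * ln \<gamma>) * Gamma (\<sigma> / a) / a"
    by (simp only: of_real_eq_iff)
qed

lemma exp_minus_ai: "(\<lambda>t::real. inverse (exp t)) absolutely_integrable_on {0<..}"
proof -
  have "(\<lambda>t::real. t powr (1-1) / exp t) absolutely_integrable_on {0..}"
    using Gamma_integral_real[of 1] by (intro nonnegative_absolutely_integrable_1) (auto simp: integrable_on_def)
  then have "(\<lambda>t::real. t powr (1-1) / exp t) absolutely_integrable_on {0<..}"
    by (rule set_integrable_subset) auto
  then show ?thesis
    by (subst set_integrable_cong[OF refl refl, where f' = "\<lambda>t::real. t powr (1-1) / exp t"])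
       (auto simp: divide_inverse)
qed

lemma lemK:
  fixes q :: real
  assumes q: "q > 0"
  shows "(\<lambda>u. exp (-u - q/u) / u) absolutely_integrable_on {0<..} \<and>
         integral {0<..} (\<lambda>u. exp (-u - q/u) / u) = 2 * besselK0 (2 * sqrt q)"
proof -
  define y where "y = sqrt q"
  have y: "y > 0" "y * y = q" using q by (auto simp: y_def)
  define \<phi> where "\<phi> = (\<lambda>u::real. exp (-u - q/u) / u)"
  have meas: "\<phi> \<in> borel_measurable (lebesgue_on {0<..})"
    unfolding \<phi>_def by (intro continuous_imp_measurable_on_sets_lebesgue continuous_intros) auto
  have bnd: "norm (\<phi> u) \<le> inverse (exp u) / q" if "u \<in> {0<..}" for u
  proof -
    have u: "u > 0" using that by simp
    have "q / u \<le> exp (q / u)" using exp_ge_add_one_self[of "q/u"] by linarith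
    then have "inverse (exp (q/u)) \<le> inverse (q/u)"
      using u q by (intro le_imp_inverse_le) auto
    then have "exp (- (q/u)) \<le> u / q" using u q by (simp add: exp_minus)
    then have "inverse (exp u) * exp (- (q/u)) \<le> inverse (exp u) * (u / q)"
      by (intro mult_left_mono) auto
    moreover have "exp (-u - q/u) = inverse (exp u) * exp (- (q/u))"
      by (simp add: exp_diff exp_minus divide_inverse)
    ultimately have "exp (-u - q/u) \<le> inverse (exp u) * (u / q)" by simp
    then have "exp (-u - q/u) / u \<le> inverse (exp u) * (u / q) / u"
      using u by (intro divide_right_mono) auto
    then have "exp (-u - q/u) / u \<le> inverse (exp u) / q"
      using u by simp
    then show ?thesis unfolding \<phi>_def using u by simp
  qed
  have gI: "(\<lambda>u. inverse (exp u) / q) integrable_on {0<..}"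
    using set_lebesgue_integral_eq_integral(1)[OF exp_minus_ai] by (rule integrable_on_divide)
  have phiI: "\<phi> absolutely_integrable_on {0<..}"
    by (rule measurable_bounded_by_integrable_imp_absolutely_integrable[OF meas _ gI bnd]) auto
  have cosh: "exp (- (2 * sqrt q) * cosh t) = exp (- y * exp t - y * exp (-t))" for t
    unfolding y_def cosh_def by (simp add: algebra_simps)
  define g1 where "g1 = (\<lambda>t::real. y * exp t)"
  have der1: "(g1 has_field_derivative g1 t) (at t within {0..})" for t
    unfolding g1_def by (auto intro!: derivative_eq_intros)
  have inj1: "inj_on g1 {0..}" using y unfolding g1_def by (auto intro!: inj_onI)
  have img1: "g1 ` {0..} = {y..}"
  proof
    show "g1 ` {0..} \<subseteq> {y..}" using y by (auto simp: g1_def)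
    show "{y..} \<subseteq> g1 ` {0..}"
    proof
      fix v assume v: "v \<in> {y..}"
      then have "g1 (ln (v / y)) = v" "ln (v/y) \<in> {0..}" using y by (auto simp: g1_def)
      then show "v \<in> g1 ` {0..}" by (metis image_eqI)
    qed
  qed
  have I1: "\<phi> absolutely_integrable_on {y..}"
    using phiI by (rule set_integrable_subset) (use y in auto)
  have cv1: "(\<lambda>t. \<bar>g1 t\<bar> *\<^sub>R \<phi> (g1 t)) absolutely_integrable_on {0..} \<and>
      integral {0..} (\<lambda>t. \<bar>g1 t\<bar> *\<^sub>R \<phi> (g1 t)) = integral {y..} \<phi>"
    using has_absolute_integral_change_of_variables_real[of "{0..}" g1 g1 \<phi> "integral {y..} \<phi>", OF _ der1 inj1]
      I1 img1 by simp
  have pt1: "\<bar>g1 t\<bar> *\<^sub>R \<phi> (g1 t) = exp (- (2 * sqrt q) * cosh t)" for t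
  proof -
    have "q / (y * exp t) = y * exp (-t)" using y by (simp add: exp_minus field_simps)
    then show ?thesis unfolding cosh \<phi>_def g1_def using y by (simp add: abs_mult)
  qed
  have K1: "besselK0 (2 * sqrt q) = integral {y..} \<phi>"
    using cv1 unfolding besselK0_def pt1 by simp
  define g2 where "g2 = (\<lambda>t::real. y * exp (-t))"
  have der2: "(g2 has_field_derivative (- g2 t)) (at t within {0..})" for t
    unfolding g2_def by (auto intro!: derivative_eq_intros)
  have inj2: "inj_on g2 {0..}" using y unfolding g2_def by (auto intro!: inj_onI)
  have img2: "g2 ` {0..} = {0<..y}"
  proof
    show "g2 ` {0..} \<subseteq> {0<..y}" using y by (auto simp: g2_def)
    show "{0<..y} \<subseteq> g2 ` {0..}"
    proof
      fix v assume v: "v \<in> {0<..y}"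
      then have "g2 (- ln (v / y)) = v" "- ln (v/y) \<in> {0..}" using y by (auto simp: g2_def)
      then show "v \<in> g2 ` {0..}" by (metis image_eqI)
    qed
  qed
  have I2: "\<phi> absolutely_integrable_on {0<..y}"
    using phiI by (rule set_integrable_subset) (use y in auto)
  have cv2: "(\<lambda>t. \<bar>- g2 t\<bar> *\<^sub>R \<phi> (g2 t)) absolutely_integrable_on {0..} \<and>
      integral {0..} (\<lambda>t. \<bar>- g2 t\<bar> *\<^sub>R \<phi> (g2 t)) = integral {0<..y} \<phi>"
    using has_absolute_integral_change_of_variables_real[of "{0..}" g2 "\<lambda>t. - g2 t" \<phi> "integral {0<..y} \<phi>", OF _ der2 inj2]
      I2 img2 by simp
  have pt2: "\<bar>- g2 t\<bar> *\<^sub>R \<phi> (g2 t) = exp (- (2 * sqrt q) * cosh t)" for t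
  proof -
    have "q / (y * exp (-t)) = y * exp t" using y by (simp add: exp_minus field_simps)
    then show ?thesis unfolding cosh \<phi>_def g2_def using y by (simp add: abs_mult algebra_simps)
  qed
  have K2: "besselK0 (2 * sqrt q) = integral {0<..y} \<phi>"
    using cv2 unfolding besselK0_def pt2 by simp
  have "(\<phi> has_integral (integral {0<..y} \<phi> + integral {y..} \<phi>)) ({0<..y} \<union> {y..})"
    using set_lebesgue_integral_eq_integral(1)[OF I1] set_lebesgue_integral_eq_integral(1)[OF I2]
    by (intro has_integral_Un) (auto intro: negligible_subset[of "{y}"])
  moreover have "{0<..y} \<union> {y..} = {0<..}" using y by auto
  ultimately have "integral {0<..} \<phi> = 2 * besselK0 (2 * sqrt q)"
    using K1 K2 by (simp add: integral_unique)
  then show ?thesis using phiI unfolding \<phi>_def by simp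
qed

lemma lemK_lb:
  fixes q :: real
  assumes q: "q > 0"
  shows "integrable lborel (\<lambda>u. indicator {0<..} u * (exp (-u - q/u) / u))"
    "(\<integral>u. indicator {0<..} u * (exp (-u - q/u) / u) \<partial>lborel) = 2 * besselK0 (2 * sqrt q)"
proof -
  have m: "(\<lambda>u::real. indicator {0<..} u *\<^sub>R (exp (-u - q/u) / u)) \<in> borel_measurable borel"
    by measurable
  show "integrable lborel (\<lambda>u. indicator {0<..} u * (exp (-u - q/u) / u))"
    using hk2lb(1)[OF conjunct1[OF lemK[OF q]] m] by simp
  show "(\<integral>u. indicator {0<..} u * (exp (-u - q/u) / u) \<partial>lborel) = 2 * besselK0 (2 * sqrt q)"
    using hk2lb(2)[OF conjunct1[OF lemK[OF q]] m] conjunct2[OF lemK[OF q]] by simp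
qed

lemma main:
  fixes a Q :: real and s :: complex
  assumes a: "a > 0" and Q: "Q > 0" and s: "Re s > 0"
  shows "integrable lborel (\<lambda>z. indicator {0<..} z *\<^sub>R (exp ((s-1) * of_real (ln z)) * of_real (2 * besselK0 (2 * sqrt (Q * z powr a)))))"
    "(\<integral>z. indicator {0<..} z *\<^sub>R (exp ((s-1) * of_real (ln z)) * of_real (2 * besselK0 (2 * sqrt (Q * z powr a)))) \<partial>lborel)
      = exp (-(s / of_real a) * of_real (ln Q)) * Gamma (s / of_real a) ^ 2 / of_real a"
proof -
  define \<sigma> where "\<sigma> = Re s"
  have \<sigma>: "\<sigma> > 0" using s by (simp add: \<sigma>_def)
  define H where "H = (\<lambda>u z::real. indicator {0<..} u *\<^sub>R (indicator {0<..} z *\<^sub>R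
      (complex_of_real (exp (-u - Q * z powr a / u) / u) * exp ((s-1) * of_real (ln z)))))"
  have Hm: "case_prod H \<in> borel_measurable (lborel \<Otimes>\<^sub>M lborel)"
    unfolding H_def by measurable
  define K1 where "K1 = exp (-(\<sigma>/a) * ln Q) * Gamma (\<sigma>/a) / a"
  define K2 where "K2 = exp (-(s / of_real a) * of_real (ln Q)) * Gamma (s / of_real a) / of_real a"
  have Hu: "H u = (\<lambda>z. complex_of_real (exp (-u) / u) * (indicator {0<..} z *\<^sub>R
      (exp ((s-1) * of_real (ln z)) * of_real (exp (-(Q/u) * z powr a)))))" if u: "u > 0" for u
  proof (rule ext)
    fix z :: real
    have "-u - Q * z powr a / u = -u + (-(Q/u) * z powr a)" by simp
    then have r: "exp (-u - Q * z powr a / u) / u = exp (-u) / u * exp (-(Q/u) * z powr a)"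
      by (simp only: exp_add) simp
    show "H u z = complex_of_real (exp (-u) / u) * (indicator {0<..} z *\<^sub>R
      (exp ((s-1) * of_real (ln z)) * of_real (exp (-(Q/u) * z powr a))))"
      unfolding H_def r using u by (simp add: indicator_def mult_ac)
  qed
  have Hu0: "H u = (\<lambda>z. 0)" if u: "\<not> u > 0" for u
    using u by (simp add: H_def)
  have nHu: "(\<lambda>z. norm (H u z)) = (\<lambda>z. exp (-u) / u * (indicator {0<..} z *
      (exp ((\<sigma>-1) * ln z) * exp (-(Q/u) * z powr a))))" if u: "u > 0" for u
  proof (rule ext)
    fix z :: real
    have N: "norm (exp ((s-1) * of_real (ln z))) = exp ((\<sigma>-1) * ln z)"
      by (simp add: norm_exp_eq_Re \<sigma>_def)
    have "norm (H u z) = \<bar>exp (-u) / u\<bar> * (\<bar>indicator {0<..} z\<bar> * (norm (exp ((s-1) * of_real (ln z))) * \<bar>exp (-(Q/u) * z powr a)\<bar>))"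
      unfolding Hu[OF u] by (simp only: norm_mult norm_scaleR norm_of_real)
    then show "norm (H u z) = exp (-u) / u * (indicator {0<..} z *
      (exp ((\<sigma>-1) * ln z) * exp (-(Q/u) * z powr a)))"
      unfolding N using u by (simp add: indicator_def)
  qed
  have intH: "integrable lborel (H u)" for u
  proof (cases "u > 0")
    case True
    then show ?thesis unfolding Hu[OF True] using lemG_lb(1)[of "Q/u" a s] Q a s
      by (intro integrable_mult_right) auto
  qed (simp add: Hu0)
  have intHv: "(\<integral>z. H u z \<partial>lborel) = complex_of_real (exp (-u) / u) *
      (exp (-(s / of_real a) * of_real (ln (Q/u))) * Gamma (s / of_real a) / of_real a)" if u: "u > 0" for u
  proof -
    have qu: "Q/u > 0" using Q u by simp
    show ?thesis by (simp only: Hu[OF u] integral_mult_right_zero lemG_lb(2)[OF qu a s])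
  qed
  have nintHv: "(\<integral>z. norm (H u z) \<partial>lborel) = K1 * (indicator {0<..} u * (exp ((\<sigma>/a - 1) * ln u) * exp (- 1 * u powr 1)))" for u
  proof (cases "u > 0")
    case u: True
    have qu: "Q/u > 0" using Q u by simp
    have "(\<integral>z. norm (H u z) \<partial>lborel) = exp (-u) / u * (exp (-(\<sigma>/a) * ln (Q/u)) * Gamma (\<sigma>/a) / a)"
      by (simp only: nHu[OF u] integral_mult_right_zero lemG_lbR(2)[OF qu a \<sigma>])
    also have "\<dots> = K1 * (indicator {0<..} u * (exp ((\<sigma>/a - 1) * ln u) * exp (- 1 * u powr 1)))"
    proof -
      have e1: "exp (-(\<sigma>/a) * ln (Q/u)) = exp (-(\<sigma>/a) * ln Q) * exp ((\<sigma>/a) * ln u)"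
        using Q u by (simp add: ln_div algebra_simps flip: exp_add)
      have e2: "exp ((\<sigma>/a - 1) * ln u) = exp ((\<sigma>/a) * ln u) / u"
        using u by (simp add: algebra_simps exp_diff)
      show ?thesis unfolding e1 e2 K1_def using u by (simp add: mult_ac)
    qed
    finally show ?thesis .
  qed (simp add: Hu0)
  have integ1: "integrable lborel (\<lambda>u. \<integral>z. norm (H u z) \<partial>lborel)"
    unfolding nintHv using lemG_lbR(1)[of 1 1 "\<sigma>/a"] \<sigma> a
    by (intro integrable_mult_right) auto
  have HI: "integrable (lborel \<Otimes>\<^sub>M lborel) (case_prod H)"
    using Hm integ1 intH by (intro lborel_pair.Fubini_integrable) auto
  have pw: "(\<integral>z. H u z \<partial>lborel) = K2 * (indicator {0<..} u *\<^sub>R (exp ((s / of_real a - 1) * of_real (ln u)) * of_real (exp (- 1 * u powr 1))))" for u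
  proof (cases "u > 0")
    case u: True
    let ?L = "complex_of_real (ln u)"
    let ?w = "s / of_real a"
    have c1: "complex_of_real (exp (-u) / u) = exp (of_real (-u)) * exp (- ?L)"
      using u by (simp add: exp_of_real exp_minus divide_inverse flip: of_real_inverse)
    have c2: "complex_of_real (ln (Q/u)) = of_real (ln Q) - ?L" using Q u by (simp add: ln_div)
    have c3: "exp (-?w * (of_real (ln Q) - ?L)) = exp (-?w * of_real (ln Q)) * exp (?w * ?L)"
      by (simp add: algebra_simps flip: exp_add)
    have c4: "exp ((?w - 1) * ?L) = exp (?w * ?L) * exp (- ?L)"
      by (simp add: algebra_simps flip: exp_add)
    have c5: "complex_of_real (exp (- 1 * u powr 1)) = exp (of_real (-u))"
    proof -
      have "- 1 * u powr 1 = -u" using u by simp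
      moreover have "complex_of_real (exp (-u)) = exp (of_real (-u))" by (rule exp_of_real[symmetric])
      ultimately show ?thesis by simp
    qed
    show ?thesis
      unfolding intHv[OF u] c1 c2 c3 c4 c5 K2_def using u by (simp add: mult_ac)
  qed (simp add: Hu0)
  have s': "Re (s / of_real a) > 0" using s a by (simp add: Re_divide_of_real)
  have outer1: "(\<integral>u. (\<integral>z. H u z \<partial>lborel) \<partial>lborel) = K2 * Gamma (s / of_real a)"
    by (simp only: pw integral_mult_right_zero lemG_lb(2)[OF zero_less_one zero_less_one s']) simp
  have outer2: "(\<lambda>z. \<integral>u. H u z \<partial>lborel) = (\<lambda>z. indicator {0<..} z *\<^sub>R (exp ((s-1) * of_real (ln z)) * of_real (2 * besselK0 (2 * sqrt (Q * z powr a)))))"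
  proof (rule ext)
    fix z :: real
    show "(\<integral>u. H u z \<partial>lborel) = indicator {0<..} z *\<^sub>R (exp ((s-1) * of_real (ln z)) * of_real (2 * besselK0 (2 * sqrt (Q * z powr a))))"
    proof (cases "z > 0")
      case z: True
      have qz: "Q * z powr a > 0" using Q z by simp
      have Hz: "(\<lambda>u. H u z) = (\<lambda>u. exp ((s-1) * of_real (ln z)) * complex_of_real (indicator {0<..} u * (exp (-u - (Q * z powr a)/u)/u)))"
        using z by (intro ext) (simp add: H_def indicator_def)
      show ?thesis
        unfolding Hz integral_mult_right_zero integral_complex_of_real lemK_lb(2)[OF qz] using z by simp
    qed (simp add: H_def)
  qed
  show "integrable lborel (\<lambda>z. indicator {0<..} z *\<^sub>R (exp ((s-1) * of_real (ln z)) * of_real (2 * besselK0 (2 * sqrt (Q * z powr a)))))"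
    using lborel_pair.integrable_snd[OF HI] unfolding outer2 .
  show "(\<integral>z. indicator {0<..} z *\<^sub>R (exp ((s-1) * of_real (ln z)) * of_real (2 * besselK0 (2 * sqrt (Q * z powr a)))) \<partial>lborel)
      = exp (-(s / of_real a) * of_real (ln Q)) * Gamma (s / of_real a) ^ 2 / of_real a"
    using lborel_pair.Fubini_integral[OF HI] outer1 unfolding outer2 K2_def by (simp add: power2_eq_square)
qed

theorem theorem6:
  fixes \<sigma> \<alpha> :: real and s :: complex
  assumes "\<sigma> > 0" and "\<alpha> > 0" and "Re s > 0"
  shows "((\<lambda>z::real. (of_real z) powr (s - 1) * of_real (2 * prod_gnd_density \<sigma> \<alpha> z))
           has_integral
          (of_real (gnd_Lambda \<sigma> \<alpha>) powr (2 - 2 * s) / of_real ((Gamma (1 / \<alpha>))^2)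
             * (Gamma (s / of_real \<alpha>))^2)) {0<..}"
proof -
  note sg = assms(1) and a = assms(2) and s = assms(3)
  define L where "L = gnd_Lambda \<sigma> \<alpha>"
  have G1: "Gamma (1/\<alpha>) > 0" "Gamma (3/\<alpha>) > 0" using a by (auto intro: Gamma_real_pos)
  have L: "L > 0" using sg G1 by (simp add: L_def gnd_Lambda_def)
  define Q where "Q = L powr (2 * \<alpha>)"
  have Q: "Q > 0" using L by (simp add: Q_def)
  define c where "c = \<alpha> * L^2 / (Gamma (1/\<alpha>))^2"
  define \<Phi> where "\<Phi> = (\<lambda>z::real. exp ((s-1) * of_real (ln z)) * of_real (2 * besselK0 (2 * sqrt (Q * z powr \<alpha>))))"
  have M1: "integrable lborel (\<lambda>z. indicator {0<..} z *\<^sub>R \<Phi> z)"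
    using main(1)[OF a Q s] unfolding \<Phi>_def .
  have M2: "(\<integral>z. indicator {0<..} z *\<^sub>R \<Phi> z \<partial>lborel) = exp (-(s / of_real \<alpha>) * of_real (ln Q)) * Gamma (s / of_real \<alpha>) ^ 2 / of_real \<alpha>"
    using main(2)[OF a Q s] unfolding \<Phi>_def .
  have I: "integrable lborel (\<lambda>z. indicator {0<..} z *\<^sub>R (complex_of_real c * \<Phi> z))"
  proof -
    have "integrable lborel (\<lambda>z. complex_of_real c * (indicator {0<..} z *\<^sub>R \<Phi> z))"
      using M1 by (rule integrable_mult_right)
    then show ?thesis by (simp add: scaleR_conv_of_real mult_ac)
  qed
  have V: "(\<integral>z. indicator {0<..} z *\<^sub>R (complex_of_real c * \<Phi> z) \<partial>lborel)
      = complex_of_real c * (exp (-(s / of_real \<alpha>) * of_real (ln Q)) * Gamma (s / of_real \<alpha>) ^ 2 / of_real \<alpha>)"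
  proof -
    have E: "(\<lambda>z. indicator {0<..} z *\<^sub>R (complex_of_real c * \<Phi> z)) = (\<lambda>z. complex_of_real c * (indicator {0<..} z *\<^sub>R \<Phi> z))"
      by (simp add: scaleR_conv_of_real mult_ac)
    show ?thesis by (simp only: E integral_mult_right_zero M2)
  qed
  have H: "((\<lambda>z. complex_of_real c * \<Phi> z) has_integral
      complex_of_real c * (exp (-(s / of_real \<alpha>) * of_real (ln Q)) * Gamma (s / of_real \<alpha>) ^ 2 / of_real \<alpha>)) {0<..}"
    using set_lebesgue_integral_eq_integral(1)[OF lb2hk(1)[OF I]] lb2hk(2)[OF I] V
    by (metis integrable_integral)
  have pt: "(of_real z) powr (s - 1) * of_real (2 * prod_gnd_density \<sigma> \<alpha> z) = complex_of_real c * \<Phi> z"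
    if z: "z \<in> {0<..}" for z
  proof -
    have z0: "z > 0" using z by simp
    have sq: "sqrt (Q * z powr \<alpha>) = L powr \<alpha> * z powr (\<alpha>/2)"
    proof (rule real_sqrt_unique)
      show "(L powr \<alpha> * z powr (\<alpha>/2))^2 = Q * z powr \<alpha>"
        using L z0 by (simp add: Q_def power2_eq_square powr_add[symmetric] mult_ac)
    qed (use L z0 in simp)
    have "prod_gnd_density \<sigma> \<alpha> z = c * besselK0 (2 * sqrt (Q * z powr \<alpha>))"
      unfolding prod_gnd_density_def Let_def sq c_def L_def using z0 by (simp add: mult_ac)
    then show ?thesis unfolding \<Phi>_def using z0 by (simp add: cpow_pos mult_ac)
  qed
  have val: "complex_of_real c * (exp (-(s / of_real \<alpha>) * of_real (ln Q)) * Gamma (s / of_real \<alpha>) ^ 2 / of_real \<alpha>)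
     = of_real L powr (2 - 2 * s) / of_real ((Gamma (1 / \<alpha>))^2) * (Gamma (s / of_real \<alpha>))^2"
  proof -
    have lnQ: "complex_of_real (ln Q) = 2 * of_real \<alpha> * of_real (ln L)" using L by (simp add: Q_def ln_powr)
    have e: "exp (-(s / of_real \<alpha>) * of_real (ln Q)) = exp (- 2 * s * of_real (ln L))"
      unfolding lnQ using a by (simp add: field_simps)
    have L2: "complex_of_real (L^2) = exp (2 * of_real (ln L))"
    proof -
      have "exp (2 * complex_of_real (ln L)) = exp (complex_of_real (ln L)) * exp (complex_of_real (ln L))"
        by (simp only: mult_2 exp_add)
      also have "\<dots> = complex_of_real (L^2)" using L by (simp only: exp_of_real exp_ln of_real_mult power2_eq_square)
      finally show ?thesis ..
    qed
    have P: "complex_of_real L powr (2 - 2 * s) = exp (2 * of_real (ln L)) * exp (- 2 * s * of_real (ln L))"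
      using L by (simp add: cpow_pos algebra_simps flip: exp_add)
    show ?thesis
      unfolding e P c_def using a G1 by (simp add: L2[symmetric] field_simps)
  qed
  show ?thesis
    using H unfolding val[folded L_def] L_def
    by (subst has_integral_cong[OF pt[unfolded L_def]]) auto
qed
end
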